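(* For all real $x\ge 1$ and $\sigma>0$, if $X\sim\mathcal{N}_{\mathbb{Z}}(\sigma^2)$ and $Y\sim\mathcal{N}(0,\sigma^2)$ (the continuous Gaussian with mean $0$ and variance $\sigma^2$), then $\Pr[X>x]\le\Pr[Y>\lfloor x\rfloor]$.
   Context: The discrete Gaussian distribution $\mathcal{N}_{\mathbb{Z}}(\sigma^2)$ centered at $0$ is the distribution on $\mathbb{Z}$ with $\Pr[X=x]=e^{-x^2/(2\sigma^2)}/\sum_{u\in\mathbb{Z}}e^{-u^2/(2\sigma^2)}$ for $x\in\mathbb{Z}$. *)

theory Defs
  imports "HOL-Probability.Probability"
begin

definition dgauss_weight :: "real \<Rightarrow> int \<Rightarrow> real" where
  "dgauss_weight \<sigma> u = exp (- (real_of_int u)\<^sup>2 / (2 * \<sigma>\<^sup>2))"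

definition dgauss_pmf :: "real \<Rightarrow> int \<Rightarrow> real" where
  "dgauss_pmf \<sigma> x = dgauss_weight \<sigma> x / (\<Sum>\<^sub>\<infinity>u\<in>(UNIV::int set). dgauss_weight \<sigma> u)"

definition dgauss_prob :: "real \<Rightarrow> int set \<Rightarrow> real" where
  "dgauss_prob \<sigma> A = (\<Sum>\<^sub>\<infinity>x\<in>A. dgauss_pmf \<sigma> x)"

text \<open>The continuous Gaussian N(0, sigma^2) as a measure on the reals
  (normal_density takes mean and standard deviation).\<close>
definition cgauss :: "real \<Rightarrow> real measure" where
  "cgauss \<sigma> = density lborel (normal_density 0 \<sigma>)"

end

theory Submission
  imports Defs
begin

lemma ptwise:
  fixes c j m s :: real
  assumes "c > 0" "j \<le> m" "0 \<le> s" "s \<le> 1"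
  shows "exp (- m\<^sup>2 / c) * exp (- (j - 1 + s)\<^sup>2 / c) \<le> exp (- j\<^sup>2 / c) * exp (- (m - 1 + s)\<^sup>2 / c)"
proof -
  have e: "m\<^sup>2 + (j-1+s)\<^sup>2 - j\<^sup>2 - (m-1+s)\<^sup>2 = 2*(1-s)*(m-j)"
    by (simp add: power2_eq_square algebra_simps)
  have "0 \<le> 2*(1-s)*(m-j)" using assms by simp
  hence "j\<^sup>2 + (m-1+s)\<^sup>2 \<le> m\<^sup>2 + (j-1+s)\<^sup>2" using e by linarith
  hence "(j\<^sup>2 + (m-1+s)\<^sup>2)/c \<le> (m\<^sup>2 + (j-1+s)\<^sup>2)/c" using assms(1) by (simp add: divide_right_mono)
  hence "- m\<^sup>2 / c + - (j - 1 + s)\<^sup>2 / c \<le> - j\<^sup>2 / c + - (m - 1 + s)\<^sup>2 / c"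
    by (simp add: add_divide_distrib)
  thus ?thesis by (simp add: exp_add[symmetric])
qed

lemma emeas_shift:
  fixes a \<sigma> :: real
  shows "emeasure (cgauss \<sigma>) {a<..a+1} = (\<integral>\<^sup>+ s. ennreal (normal_density 0 \<sigma> (a+s)) * indicator {0<..1} s \<partial>lborel)"
proof -
  have "emeasure (cgauss \<sigma>) {a<..a+1} = (\<integral>\<^sup>+ u. ennreal (normal_density 0 \<sigma> u) * indicator {a<..a+1} u \<partial>lborel)"
    unfolding cgauss_def by (subst emeasure_density) auto
  also have "\<dots> = (\<integral>\<^sup>+ s. ennreal (normal_density 0 \<sigma> (a + 1 * s)) * indicator {a<..a+1} (a + 1 * s) \<partial>lborel)"
    by (subst nn_integral_real_affine[where c=1 and t=a]) auto
  also have "\<dots> = (\<integral>\<^sup>+ s. ennreal (normal_density 0 \<sigma> (a+s)) * indicator {0<..1} s \<partial>lborel)"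
    by (rule nn_integral_cong) (auto simp: indicator_def)
  finally show ?thesis .
qed

lemma ptwise_g:
  fixes \<sigma> j m s :: real
  assumes "\<sigma> > 0" "j \<le> m" "0 \<le> s" "s \<le> 1"
  shows "exp (- m\<^sup>2 / (2*\<sigma>\<^sup>2)) * normal_density 0 \<sigma> (j - 1 + s) \<le> exp (- j\<^sup>2 / (2*\<sigma>\<^sup>2)) * normal_density 0 \<sigma> (m - 1 + s)"
proof -
  have "exp (- m\<^sup>2 / (2*\<sigma>\<^sup>2)) * exp (- (j - 1 + s)\<^sup>2 / (2*\<sigma>\<^sup>2)) \<le> exp (- j\<^sup>2 / (2*\<sigma>\<^sup>2)) * exp (- (m - 1 + s)\<^sup>2 / (2*\<sigma>\<^sup>2))"
    by (rule ptwise) (use assms in auto)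
  hence "1 / sqrt (2 * pi * \<sigma>\<^sup>2) * (exp (- m\<^sup>2 / (2*\<sigma>\<^sup>2)) * exp (- (j - 1 + s)\<^sup>2 / (2*\<sigma>\<^sup>2))) \<le> 1 / sqrt (2 * pi * \<sigma>\<^sup>2) * (exp (- j\<^sup>2 / (2*\<sigma>\<^sup>2)) * exp (- (m - 1 + s)\<^sup>2 / (2*\<sigma>\<^sup>2)))"
    by (rule mult_left_mono) auto
  thus ?thesis unfolding normal_density_def by (simp add: algebra_simps)
qed

lemma meas_ineq:
  fixes \<sigma> j m :: real
  assumes "\<sigma> > 0" "j \<le> m"
  shows "exp (- m\<^sup>2 / (2*\<sigma>\<^sup>2)) * measure (cgauss \<sigma>) {j-1<..j} \<le> exp (- j\<^sup>2 / (2*\<sigma>\<^sup>2)) * measure (cgauss \<sigma>) {m-1<..m}"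
proof -
  interpret P: prob_space "cgauss \<sigma>" unfolding cgauss_def using assms(1) by (rule prob_space_normal_density)
  define wm where "wm = exp (- m\<^sup>2 / (2*\<sigma>\<^sup>2))"
  define wj where "wj = exp (- j\<^sup>2 / (2*\<sigma>\<^sup>2))"
  have ej: "{j-1<..j} = {j-1<..j-1+1}" and em: "{m-1<..m} = {m-1<..m-1+1}" by auto
  have "ennreal wm * emeasure (cgauss \<sigma>) {j-1<..j-1+1}
      = (\<integral>\<^sup>+ s. ennreal wm * (ennreal (normal_density 0 \<sigma> (j-1+s)) * indicator {0<..1} s) \<partial>lborel)"
    unfolding emeas_shift by (rule nn_integral_cmult[symmetric]) auto
  also have "\<dots> \<le> (\<integral>\<^sup>+ s. ennreal wj * (ennreal (normal_density 0 \<sigma> (m-1+s)) * indicator {0<..1} s) \<partial>lborel)"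
  proof (rule nn_integral_mono)
    fix s
    show "ennreal wm * (ennreal (normal_density 0 \<sigma> (j-1+s)) * indicator {0<..1} s)
        \<le> ennreal wj * (ennreal (normal_density 0 \<sigma> (m-1+s)) * indicator {0<..1} s)"
    proof (cases "s \<in> {0<..1}")
      case True
      have "wm * normal_density 0 \<sigma> (j - 1 + s) \<le> wj * normal_density 0 \<sigma> (m - 1 + s)"
        unfolding wm_def wj_def by (rule ptwise_g) (use assms True in auto)
      hence "ennreal (wm * normal_density 0 \<sigma> (j - 1 + s)) \<le> ennreal (wj * normal_density 0 \<sigma> (m - 1 + s))"
        by (rule ennreal_leI)
      thus ?thesis using True by (simp add: wm_def wj_def ennreal_mult[symmetric])
    qed simp
  qed
  also have "\<dots> = ennreal wj * emeasure (cgauss \<sigma>) {m-1<..m-1+1}"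
    unfolding emeas_shift by (rule nn_integral_cmult) auto
  finally have "ennreal wm * emeasure (cgauss \<sigma>) {j-1<..j} \<le> ennreal wj * emeasure (cgauss \<sigma>) {m-1<..m}"
    by simp
  hence "ennreal (wm * measure (cgauss \<sigma>) {j-1<..j}) \<le> ennreal (wj * measure (cgauss \<sigma>) {m-1<..m})"
    by (simp add: P.emeasure_eq_measure wm_def wj_def ennreal_mult[symmetric])
  hence "wm * measure (cgauss \<sigma>) {j-1<..j} \<le> wj * measure (cgauss \<sigma>) {m-1<..m}"
    by (subst (asm) ennreal_le_iff) (auto simp: wj_def)
  thus ?thesis by (simp add: wm_def wj_def)
qed


lemma sets_cgauss[simp]: "sets (cgauss \<sigma>) = sets borel"
  by (simp add: cgauss_def)

lemma meas_add_int:
  fixes a b :: int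
  assumes "\<sigma> > 0" "a \<le> b"
  shows "measure (cgauss \<sigma>) {real_of_int a<..real_of_int b} = (\<Sum>i\<in>{a+1..b}. measure (cgauss \<sigma>) {real_of_int i - 1<..real_of_int i})"
  using assms(2)
proof (induction b rule: int_ge_induct)
  case base
  then show ?case by simp
next
  case (step b)
  interpret P: prob_space "cgauss \<sigma>" unfolding cgauss_def using assms(1) by (rule prob_space_normal_density)
  have "{real_of_int a<..real_of_int (b+1)} = {real_of_int a<..real_of_int b} \<union> {real_of_int (b+1) - 1<..real_of_int (b+1)}"
    using step(1) by auto
  hence "measure (cgauss \<sigma>) {real_of_int a<..real_of_int (b+1)} = measure (cgauss \<sigma>) {real_of_int a<..real_of_int b} + measure (cgauss \<sigma>) {real_of_int (b+1) - 1<..real_of_int (b+1)}"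
    by (simp add: P.finite_measure_Union)
  moreover have "{a+1..b+1} = insert (b+1) {a+1..b}" using step(1) by auto
  ultimately show ?case using step by simp
qed

lemma meas_half:
  assumes "\<sigma> > 0"
  shows "measure (cgauss \<sigma>) {0<..} = 1/2"
proof -
  interpret P: prob_space "cgauss \<sigma>" unfolding cgauss_def using assms(1) by (rule prob_space_normal_density)
  have "emeasure (cgauss \<sigma>) {..<0} = (\<integral>\<^sup>+ u. ennreal (normal_density 0 \<sigma> u) * indicator {..<0} u \<partial>lborel)"
    unfolding cgauss_def by (subst emeasure_density) auto
  also have "\<dots> = ennreal \<bar>-1\<bar> * (\<integral>\<^sup>+ u. ennreal (normal_density 0 \<sigma> (0 + (-1) * u)) * indicator {..<0} (0 + (-1) * u) \<partial>lborel)"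
    by (rule nn_integral_real_affine) auto
  also have "\<dots> = (\<integral>\<^sup>+ u. ennreal (normal_density 0 \<sigma> u) * indicator {0<..} u \<partial>lborel)"
    by (simp add: normal_density_def indicator_def)
  also have "\<dots> = emeasure (cgauss \<sigma>) {0<..}"
    unfolding cgauss_def by (subst emeasure_density) auto
  finally have e1: "measure (cgauss \<sigma>) {..<0} = measure (cgauss \<sigma>) {0<..}"
    by (simp add: P.emeasure_eq_measure)
  have "emeasure (cgauss \<sigma>) {0} = (\<integral>\<^sup>+ u. ennreal (normal_density 0 \<sigma> u) * indicator {0} u \<partial>lborel)"
    unfolding cgauss_def by (subst emeasure_density) auto
  also have "\<dots> = 0"
    by (subst nn_integral_indicator_singleton) auto
  finally have e2: "measure (cgauss \<sigma>) {0} = 0"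
    by (simp add: P.emeasure_eq_measure)
  have "UNIV = ({..<0} \<union> {0}) \<union> {0::real<..}" by auto
  have "1 = measure (cgauss \<sigma>) (({..<0} \<union> {0}) \<union> {0::real<..})"
  proof -
    have "space (cgauss \<sigma>) = UNIV" by (simp add: cgauss_def)
    thus ?thesis using P.prob_space \<open>UNIV = _\<close> by metis
  qed
  also have "\<dots> = measure (cgauss \<sigma>) ({..<0} \<union> {0}) + measure (cgauss \<sigma>) {0<..}"
    by (rule P.finite_measure_Union) auto
  also have "measure (cgauss \<sigma>) ({..<0} \<union> {0}) = measure (cgauss \<sigma>) {..<0} + measure (cgauss \<sigma>) {0}"
    by (rule P.finite_measure_Union) auto
  finally show ?thesis using e1 e2 by simp
qed


lemma fin_ineq:
  fixes N M :: int
  assumes "\<sigma> > 0" "1 \<le> N" "N \<le> M"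
  shows "(\<Sum>m\<in>{N+1..M}. dgauss_weight \<sigma> m) * measure (cgauss \<sigma>) {0<..real_of_int N}
         \<le> (\<Sum>j\<in>{1..N}. dgauss_weight \<sigma> j) * measure (cgauss \<sigma>) {real_of_int N<..}"
proof -
  interpret P: prob_space "cgauss \<sigma>" unfolding cgauss_def using assms(1) by (rule prob_space_normal_density)
  define W where "W = dgauss_weight \<sigma>"
  define \<mu> where "\<mu> = (\<lambda>i::int. measure (cgauss \<sigma>) {real_of_int i - 1<..real_of_int i})"
  have A: "measure (cgauss \<sigma>) {0<..real_of_int N} = (\<Sum>j\<in>{1..N}. \<mu> j)"
    using meas_add_int[OF assms(1), of 0 N] assms(2) by (simp add: \<mu>_def)
  have B: "measure (cgauss \<sigma>) {real_of_int N<..real_of_int M} = (\<Sum>m\<in>{N+1..M}. \<mu> m)"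
    using meas_add_int[OF assms(1), of N M] assms(3) by (simp add: \<mu>_def)
  have step: "W m * measure (cgauss \<sigma>) {0<..real_of_int N} \<le> (\<Sum>j\<in>{1..N}. W j) * \<mu> m"
    if m: "m \<in> {N+1..M}" for m
  proof -
    have "W m * measure (cgauss \<sigma>) {0<..real_of_int N} = (\<Sum>j\<in>{1..N}. W m * \<mu> j)"
      by (simp add: A sum_distrib_left)
    also have "\<dots> \<le> (\<Sum>j\<in>{1..N}. W j * \<mu> m)"
    proof (rule sum_mono)
      fix j assume j: "j \<in> {1..N}"
      have "real_of_int j \<le> real_of_int m" using j m by auto
      from meas_ineq[OF assms(1) this]
      show "W m * \<mu> j \<le> W j * \<mu> m" by (simp add: W_def \<mu>_def dgauss_weight_def)
    qed
    also have "\<dots> = (\<Sum>j\<in>{1..N}. W j) * \<mu> m" by (simp add: sum_distrib_right)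
    finally show ?thesis .
  qed
  have "(\<Sum>m\<in>{N+1..M}. W m) * measure (cgauss \<sigma>) {0<..real_of_int N}
       = (\<Sum>m\<in>{N+1..M}. W m * measure (cgauss \<sigma>) {0<..real_of_int N})"
    by (simp add: sum_distrib_right)
  also have "\<dots> \<le> (\<Sum>m\<in>{N+1..M}. (\<Sum>j\<in>{1..N}. W j) * \<mu> m)"
    by (rule sum_mono) (rule step)
  also have "\<dots> = (\<Sum>j\<in>{1..N}. W j) * measure (cgauss \<sigma>) {real_of_int N<..real_of_int M}"
    by (simp add: B sum_distrib_left)
  also have "\<dots> \<le> (\<Sum>j\<in>{1..N}. W j) * measure (cgauss \<sigma>) {real_of_int N<..}"
  proof (rule mult_left_mono)
    show "0 \<le> (\<Sum>j\<in>{1..N}. W j)" by (rule sum_nonneg) (simp add: W_def dgauss_weight_def)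
    show "measure (cgauss \<sigma>) {real_of_int N<..real_of_int M} \<le> measure (cgauss \<sigma>) {real_of_int N<..}"
      by (rule P.finite_measure_mono) auto
  qed
  finally show ?thesis by (simp add: W_def)
qed


lemma tail_ineq:
  fixes N :: int
  assumes "\<sigma> > 0" "1 \<le> N" "dgauss_weight \<sigma> summable_on {k. k \<ge> N+1}"
  shows "infsum (dgauss_weight \<sigma>) {k. k \<ge> N+1} * measure (cgauss \<sigma>) {0<..real_of_int N}
         \<le> (\<Sum>j\<in>{1..N}. dgauss_weight \<sigma> j) * measure (cgauss \<sigma>) {real_of_int N<..}"
proof -
  define A where "A = measure (cgauss \<sigma>) {0<..real_of_int N}"
  define C where "C = (\<Sum>j\<in>{1..N}. dgauss_weight \<sigma> j) * measure (cgauss \<sigma>) {real_of_int N<..}"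
  have C0: "0 \<le> C" unfolding C_def
    by (intro mult_nonneg_nonneg sum_nonneg) (auto simp: dgauss_weight_def)
  have A0: "0 \<le> A" by (simp add: A_def)
  show ?thesis
  proof (cases "A = 0")
    case True then show ?thesis using C0 by (simp add: A_def C_def)
  next
    case False
    hence Apos: "A > 0" using A0 by simp
    have "infsum (dgauss_weight \<sigma>) {k. k \<ge> N+1} \<le> C / A"
    proof (rule infsum_le_finite_sums[OF assms(3)])
      fix F assume F: "finite F" "F \<subseteq> {k. k \<ge> N+1}"
      define M where "M = Max (insert N F)"
      have NM: "N \<le> M" unfolding M_def using F by simp
      have FM: "F \<subseteq> {N+1..M}" unfolding M_def using F by auto
      have "sum (dgauss_weight \<sigma>) F \<le> (\<Sum>m\<in>{N+1..M}. dgauss_weight \<sigma> m)"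
        by (rule sum_mono2) (use FM in \<open>auto simp: dgauss_weight_def\<close>)
      moreover have "(\<Sum>m\<in>{N+1..M}. dgauss_weight \<sigma> m) * A \<le> C"
        unfolding A_def C_def by (rule fin_ineq[OF assms(1,2) NM])
      ultimately have "sum (dgauss_weight \<sigma>) F * A \<le> C"
        using Apos by (meson less_imp_le mult_right_mono order_trans)
      thus "sum (dgauss_weight \<sigma>) F \<le> C / A" using Apos by (simp add: pos_le_divide_eq)
    qed
    thus ?thesis using Apos by (simp add: pos_le_divide_eq A_def C_def)
  qed
qed


theorem mainTheorem5:
  fixes x \<sigma> :: real
  assumes "x \<ge> 1" and "\<sigma> > 0"
  shows "dgauss_prob \<sigma> {k. real_of_int k > x}
           \<le> measure (cgauss \<sigma>) {y. y > real_of_int \<lfloor>x\<rfloor>}"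
proof -
  interpret P: prob_space "cgauss \<sigma>" unfolding cgauss_def using assms(2) by (rule prob_space_normal_density)
  define N where "N = \<lfloor>x\<rfloor>"
  have N1: "1 \<le> N" unfolding N_def using assms(1) by simp
  define W where "W = dgauss_weight \<sigma>"
  have W0: "\<And>k. 0 \<le> W k" by (simp add: W_def dgauss_weight_def)
  define S where "S = infsum W UNIV"
  define I where "I = measure (cgauss \<sigma>) {real_of_int N<..}"
  define A where "A = measure (cgauss \<sigma>) {0<..real_of_int N}"
  define Tl where "Tl = {k::int. k \<ge> N+1}"
  define T where "T = infsum W Tl"
  have setx: "{k. real_of_int k > x} = Tl"
    unfolding Tl_def N_def by (auto simp: floor_less_iff less_floor_iff) (linarith+)
  have sety: "{y. y > real_of_int \<lfloor>x\<rfloor>} = {real_of_int N<..}" by (auto simp: N_def)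
  have I0: "0 \<le> I" by (simp add: I_def)
  show ?thesis
  proof (cases "W summable_on UNIV")
    case False
    hence "S = 0" unfolding S_def by (rule infsum_not_exists)
    hence "dgauss_prob \<sigma> {k. real_of_int k > x} = 0"
      by (simp add: dgauss_prob_def dgauss_pmf_def S_def W_def)
    thus ?thesis by simp
  next
    case True
    have sub: "W summable_on B" for B by (rule summable_on_subset_banach[OF True]) auto
    define Pos where "Pos = {k::int. k \<ge> 1}"
    define Neg where "Neg = {k::int. k \<le> -1}"
    have disj1: "(Pos \<union> Neg) \<inter> {0} = {}" and disj2: "Pos \<inter> Neg = {}"
      by (auto simp: Pos_def Neg_def)
    have negpos: "Neg = uminus ` Pos"
    proof
      show "Neg \<subseteq> uminus ` Pos"
      proof
        fix k assume "k \<in> Neg"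
        thus "k \<in> uminus ` Pos" by (intro image_eqI[where x="-k"]) (auto simp: Pos_def Neg_def)
      qed
    qed (auto simp: Pos_def Neg_def)
    have "S = infsum W ((Pos \<union> Neg) \<union> {0})"
      unfolding S_def by (rule arg_cong[where f="infsum W"]) (auto simp: Pos_def Neg_def)
    also have "\<dots> = infsum W (Pos \<union> Neg) + infsum W {0}"
      by (rule infsum_Un_disjoint[OF sub sub disj1])
    also have "infsum W (Pos \<union> Neg) = infsum W Pos + infsum W Neg"
      by (rule infsum_Un_disjoint[OF sub sub disj2])
    also have "infsum W {0} = 1" by (simp add: W_def dgauss_weight_def)
    also have "infsum W Neg = infsum (W \<circ> uminus) Pos"
      by (simp add: negpos infsum_reindex inj_on_def)
    also have "W \<circ> uminus = W" by (auto simp: W_def dgauss_weight_def fun_eq_iff)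
    finally have S_eq: "S = 2 * infsum W Pos + 1" by simp
    have disj3: "{1..N} \<inter> Tl = {}" by (auto simp: Tl_def)
    have "Pos = {1..N} \<union> Tl" using N1 by (auto simp: Pos_def Tl_def)
    hence "infsum W Pos = infsum W {1..N} + infsum W Tl"
      using infsum_Un_disjoint[OF sub sub disj3] by simp
    hence Pos_eq: "infsum W Pos = (\<Sum>j\<in>{1..N}. W j) + T" by (simp add: T_def)
    define \<Sigma> where "\<Sigma> = (\<Sum>j\<in>{1..N}. W j)"
    have \<Sigma>0: "0 \<le> \<Sigma>" unfolding \<Sigma>_def by (rule sum_nonneg) (rule W0)
    have T0: "0 \<le> T" unfolding T_def by (rule infsum_nonneg) (rule W0)
    have tail: "T * A \<le> \<Sigma> * I"
      unfolding T_def A_def \<Sigma>_def I_def Tl_def W_def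
      by (rule tail_ineq[OF assms(2) N1]) (rule sub[unfolded W_def])
    have "{0::real<..} = {0<..real_of_int N} \<union> {real_of_int N<..}" using N1 by auto
    hence "measure (cgauss \<sigma>) {0::real<..} = measure (cgauss \<sigma>) ({0<..real_of_int N} \<union> {real_of_int N<..})"
      by simp
    also have "\<dots> = A + I"
      unfolding A_def I_def by (rule P.finite_measure_Union) auto
    finally have AI: "A + I = 1/2" using meas_half[OF assms(2)] by simp
    have "T = T * (2 * (A + I))" using AI by simp
    also have "\<dots> = 2 * (T * A) + 2 * T * I" by (simp add: algebra_simps)
    also have "\<dots> \<le> 2 * (\<Sigma> * I) + 2 * T * I" using tail by simp
    also have "\<dots> \<le> I * S" using I0 S_eq Pos_eq \<Sigma>_def by (simp add: algebra_simps)
    finally have TS: "T \<le> I * S" .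
    have Spos: "S > 0" using S_eq Pos_eq \<Sigma>0 T0 unfolding \<Sigma>_def by simp
    have "dgauss_prob \<sigma> {k. real_of_int k > x} = infsum (\<lambda>k. W k * (1/S)) Tl"
      unfolding dgauss_prob_def dgauss_pmf_def setx by (simp add: S_def W_def)
    also have "\<dots> = T * (1/S)" unfolding T_def by (rule infsum_cmult_left) (rule sub)
    also have "\<dots> \<le> I" using TS Spos by (simp add: pos_divide_le_eq mult.commute)
    finally show ?thesis by (simp add: sety I_def)
  qed
qed

end
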